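(* Let $0<q<1$. Then \[ \sum_{n=0}^{\infty}\frac{(1+q^{2n+1})\,q^{5n}}{(1-q^{2n-1})^{2}(1-q^{2n+1})^{2}(1-q^{2n+3})^{2}}=\frac{\pi_{q}^{2}(1+q+q^{2})\,q^{3/2}}{(1+q^{2})(1-q^{2})^{6}}. \]
   Context: Let $0<q<1$. With $(z;q)_\infty=\prod_{k\ge0}(1-zq^k)$, Gosper's $q$-pi is $\pi_q=(1-q^2)q^{1/4}\frac{(q^2;q^2)_\infty^2}{(q;q^2)_\infty^2}$. *)

theory Defs
  imports "HOL-Analysis.Analysis"
begin

definition qpoch_inf :: "real \<Rightarrow> real \<Rightarrow> real" where
  "qpoch_inf z q = (\<Prod>k. (1 - z * q ^ k))"

definition gosper_pi_q :: "real \<Rightarrow> real" where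
  "gosper_pi_q q = (1 - q^2) * q powr (1/4) * (qpoch_inf (q^2) (q^2))^2 / (qpoch_inf q (q^2))^2"

end

theory Submission
  imports Defs "HOL-Computational_Algebra.Polynomial"
begin


lemma lagrange_interp:
  fixes P :: "real poly" and a b x :: "nat \<Rightarrow> real"
  assumes deg: "degree P \<le> n"
    and root: "\<And>j. j \<le> n \<Longrightarrow> a j * x j + b j = 0"
    and nz: "\<And>j k. j \<le> n \<Longrightarrow> k \<le> n \<Longrightarrow> k \<noteq> j \<Longrightarrow> a k * x j + b k \<noteq> 0"
  shows "poly P y = (\<Sum>j\<le>n. poly P (x j) / (\<Prod>k\<in>{..n}-{j}. a k * x j + b k) * (\<Prod>k\<in>{..n}-{j}. a k * y + b k))"
proof -
  define c where "c j = poly P (x j) / (\<Prod>k\<in>{..n}-{j}. a k * x j + b k)" for j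
  define L where "L j = (\<Prod>k\<in>{..n}-{j}. [:b k, a k:])" for j
  define Q where "Q = P - (\<Sum>j\<le>n. smult (c j) (L j))"
  have polyL: "poly (L j) z = (\<Prod>k\<in>{..n}-{j}. a k * z + b k)" for j z
    by (simp add: L_def poly_prod algebra_simps)
  have degL: "degree (L j) \<le> n" if "j \<le> n" for j
  proof -
    have "degree (L j) \<le> (\<Sum>k\<in>{..n}-{j}. degree [:b k, a k:])" unfolding L_def using degree_prod_sum_le[of "{..n}-{j}" "\<lambda>k. [:b k, a k:]"] by (simp add: o_def)
    also have "\<dots> \<le> (\<Sum>k\<in>{..n}-{j}. 1)" by (intro sum_mono) auto
    also have "\<dots> = n" using that by simp
    finally show ?thesis .
  qed
  have degQ: "degree Q \<le> n"
    unfolding Q_def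
    by (intro degree_diff_le deg degree_sum_le) (auto intro: order.trans[OF degree_smult_le] degL)
  have Qroot: "poly Q (x i) = 0" if i: "i \<le> n" for i
  proof -
    have z: "(\<Sum>j\<in>{..n}-{i}. c j * poly (L j) (x i)) = 0"
    proof (rule sum.neutral, rule ballI)
        fix j assume j: "j \<in> {..n} - {i}"
        have "(\<Prod>k\<in>{..n}-{j}. a k * x i + b k) = 0"
          using i j root[OF i] by (intro prod_zero) auto
        thus "c j * poly (L j) (x i) = 0" by (simp add: polyL)
    qed
    have "(\<Sum>j\<le>n. c j * poly (L j) (x i)) = c i * poly (L i) (x i)"
      using sum.remove[of "{..n}" i "\<lambda>j. c j * poly (L j) (x i)"] i z by simp
    also have "\<dots> = poly P (x i)"
    proof -
      have "(\<Prod>k\<in>{..n}-{i}. a k * x i + b k) \<noteq> 0"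
        using nz[OF i] by (subst prod_zero_iff) auto
      thus ?thesis by (simp add: c_def polyL)
    qed
    finally show ?thesis by (simp add: Q_def poly_sum)
  qed
  have inj: "inj_on x {..n}"
  proof (rule inj_onI)
    fix i j assume "i \<in> {..n}" "j \<in> {..n}" "x i = x j"
    thus "i = j" using nz[of j i] root[of i] by auto
  qed
  have "Q = 0"
  proof (rule ccontr)
    assume "Q \<noteq> 0"
    hence "card {z. poly Q z = 0} \<le> degree Q" by (rule card_poly_roots_bound)
    moreover have "card (x ` {..n}) \<le> card {z. poly Q z = 0}"
      using Qroot \<open>Q \<noteq> 0\<close> by (intro card_mono poly_roots_finite) auto
    moreover have "card (x ` {..n}) = n + 1" using inj by (simp add: card_image)
    ultimately show False using degQ by simp
  qed
  hence "poly P y = (\<Sum>j\<le>n. c j * poly (L j) y)"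
    by (simp add: Q_def poly_sum)
  thus ?thesis by (simp add: c_def polyL)
qed



definition P1 :: "real \<Rightarrow> nat \<Rightarrow> real" where "P1 q n = (\<Prod>k<n. 1 - q^(2*k+1))"
definition P2 :: "real \<Rightarrow> nat \<Rightarrow> real" where "P2 q n = (\<Prod>k<n. 1 - q^(2*k+2))"

lemma prod_split_add: "(\<Prod>k<j+m. f k) = (\<Prod>k<j. f k) * (\<Prod>i<m. f (j+i)) "
  for f :: "nat \<Rightarrow> real"
  by (induction m) (auto simp: mult_ac)

lemma prod_rev_lt: "(\<Prod>k<j. f k) = (\<Prod>k<j. f (j - 1 - k))" for f :: "nat \<Rightarrow> real"
proof -
  have "(\<Prod>k<j. f (j - 1 - k)) = (\<Prod>k\<in>(\<lambda>k. j - 1 - k) ` {..<j}. f k)"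
    by (subst prod.reindex) (auto simp: inj_on_def)
  also have "(\<lambda>k. j - 1 - k) ` {..<j} = {..<j}"
  proof (safe)
    fix x assume "x < j"
    thus "x \<in> (\<lambda>k. j - 1 - k) ` {..<j}" by (intro image_eqI[of _ _ "j - 1 - x"]) auto
  qed auto
  finally show ?thesis by simp
qed

lemma prod_pow_odd: "(\<Prod>k<j. (q::real)^(2*k+1)) = q^(j*j)"
proof (induction j)
  case (Suc j)
  have "(\<Prod>k<Suc j. q^(2*k+1)) = q^(j*j) * q^(2*j+1)" using Suc by simp
  also have "\<dots> = q^(j*j + (2*j+1))" by (rule power_add[symmetric])
  also have "j*j + (2*j+1) = Suc j * Suc j" by simp
  finally show ?case .
qed simp

lemma prod_pow_even: "(\<Prod>k<j. (q::real)^(2*k+2)) = q^(j*(j+1))"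
proof (induction j)
  case (Suc j)
  have "(\<Prod>k<Suc j. q^(2*k+2)) = q^(j*(j+1)) * q^(2*j+2)" using Suc by simp
  also have "\<dots> = q^(j*(j+1) + (2*j+2))" by (rule power_add[symmetric])
  also have "j*(j+1) + (2*j+2) = Suc j * (Suc j + 1)" by simp
  finally show ?case .
qed simp

lemma prod_neg_div: "(\<Prod>k<j. (-1) * f k / g k) = (-1)^j * (\<Prod>k<j. f k) / (\<Prod>k<j. g k)"
  for f g :: "nat \<Rightarrow> real"
  by (induction j) (auto simp: field_simps)

context
  fixes q :: real
  assumes q0: "0 < q" and q1: "q < 1"
begin

lemma N1: "(\<Prod>k<j. 1 - q^(2*k+1)/q^(2*j)) = (-1)^j * P1 q j / q^(j*j)"
proof -
  have "(\<Prod>k<j. 1 - q^(2*k+1)/q^(2*j)) = (\<Prod>k<j. 1 - q^(2*(j-1-k)+1)/q^(2*j))"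
    by (rule prod_rev_lt)
  also have "\<dots> = (\<Prod>k<j. (-1) * (1 - q^(2*k+1)) / q^(2*k+1))"
  proof (rule prod.cong[OF refl])
    fix k assume "k \<in> {..<j}"
    hence e: "2*j = (2*(j-1-k)+1) + (2*k+1)" by auto
    show "1 - q^(2*(j-1-k)+1)/q^(2*j) = (-1) * (1 - q^(2*k+1)) / q^(2*k+1)"
      using q0 by (subst e, subst power_add) (simp add: field_simps)
  qed
  also have "\<dots> = (-1)^j * P1 q j / q^(j*j)"
    by (subst prod_neg_div) (simp only: P1_def prod_pow_odd)
  finally show ?thesis .
qed

lemma N2: "(\<Prod>k<j. 1 - q^(2*k)/q^(2*j)) = (-1)^j * P2 q j / q^(j*(j+1))"
proof -
  have "(\<Prod>k<j. 1 - q^(2*k)/q^(2*j)) = (\<Prod>k<j. 1 - q^(2*(j-1-k))/q^(2*j))"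
    by (rule prod_rev_lt)
  also have "\<dots> = (\<Prod>k<j. (-1) * (1 - q^(2*k+2)) / q^(2*k+2))"
  proof (rule prod.cong[OF refl])
    fix k assume "k \<in> {..<j}"
    hence e: "2*j = (2*(j-1-k)) + (2*k+2)" by auto
    show "1 - q^(2*(j-1-k))/q^(2*j) = (-1) * (1 - q^(2*k+2)) / q^(2*k+2)"
      using q0 by (subst e, subst power_add) (simp add: field_simps)
  qed
  also have "\<dots> = (-1)^j * P2 q j / q^(j*(j+1))"
    by (subst prod_neg_div) (simp only: P2_def prod_pow_even)
  finally show ?thesis .
qed

lemma pow_lt1: "n > 0 \<Longrightarrow> q^n < 1"
  using q0 q1 by (simp add: power_less_one_iff)

lemma P1_pos: "P1 q n > 0"
  unfolding P1_def
proof (intro prod_pos)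
  fix k show "0 < 1 - q^(2*k+1)" using pow_lt1[of "2*k+1"] by linarith
qed
lemma P2_pos: "P2 q n > 0"
  unfolding P2_def
proof (intro prod_pos)
  fix k show "0 < 1 - q^(2*k+2)" using pow_lt1[of "2*k+2"] by linarith
qed
lemma P1_le1: "P1 q n \<le> 1"
  unfolding P1_def
proof (intro prod_le_1 conjI)
  fix k show "0 \<le> 1 - q^(2*k+1)" using pow_lt1[of "2*k+1"] by linarith
  show "1 - q^(2*k+1) \<le> 1" using q0 by simp
qed
lemma P2_le1: "P2 q n \<le> 1"
  unfolding P2_def
proof (intro prod_le_1 conjI)
  fix k show "0 \<le> 1 - q^(2*k+2)" using pow_lt1[of "2*k+2"] by linarith
  show "1 - q^(2*k+2) \<le> 1" using q0 by simp
qed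

lemma aux_div: "(c::real) \<noteq> 0 \<Longrightarrow> c * X = Y \<Longrightarrow> X = Y / c"
  by (simp add: field_simps)

lemma N3: "j \<le> N \<Longrightarrow> (\<Prod>k<N. 1 - q^(2*k+1)/q^(2*j)) = (-1)^j * P1 q j / q^(j*j) * P1 q (N-j)"
proof -
  assume "j \<le> N"
  then obtain m where m: "N = j + m" using le_Suc_ex by blast
  have "(\<Prod>k<N. 1 - q^(2*k+1)/q^(2*j)) = (\<Prod>k<j. 1 - q^(2*k+1)/q^(2*j)) * (\<Prod>i<m. 1 - q^(2*(j+i)+1)/q^(2*j))"
    unfolding m by (rule prod_split_add)
  also have "(\<Prod>i<m. 1 - q^(2*(j+i)+1)/q^(2*j)) = P1 q m"
    unfolding P1_def
  proof (rule prod.cong[OF refl])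
    fix i
    have "q^(2*(j+i)+1) = q^(2*j) * q^(2*i+1)" by (simp add: power_add[symmetric] algebra_simps)
    thus "1 - q^(2*(j+i)+1)/q^(2*j) = 1 - q^(2*i+1)" using q0 by simp
  qed
  finally have e1: "(\<Prod>k<N. 1 - q^(2*k+1)/q^(2*j)) = (\<Prod>k<j. 1 - q^(2*k+1)/q^(2*j)) * P1 q m" .
  show ?thesis by (subst e1, subst N1) (simp add: m)
qed

lemma N4: "(\<Prod>k<N. 1 - q^(2*k+2*j+3)) = P1 q (N+j+1) / P1 q (j+1)"
proof -
  have "P1 q (j+1+N) = P1 q (j+1) * (\<Prod>i<N. 1 - q^(2*(j+1+i)+1))"
    unfolding P1_def by (rule prod_split_add)
  also have "(\<Prod>i<N. 1 - q^(2*(j+1+i)+1)) = (\<Prod>k<N. 1 - q^(2*k+2*j+3))"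
  proof (rule prod.cong[OF refl])
    fix i have "2*(j+1+i)+1 = 2*i+2*j+3" by simp
    thus "1 - q^(2*(j+1+i)+1) = 1 - q^(2*i+2*j+3)" by (simp only:)
  qed
  finally show ?thesis using P1_pos[of "j+1"] by (simp add: field_simps add_ac)
qed

lemma N5: "j \<le> N \<Longrightarrow> (\<Prod>k\<in>{..N}-{j}. 1 - q^(2*k)/q^(2*j)) = (-1)^j * P2 q j / q^(j*(j+1)) * P2 q (N-j)"
proof -
  assume jN: "j \<le> N"
  have S: "{..N}-{j} = {..<j} \<union> (\<lambda>i. j+1+i) ` {..<N-j}"
  proof (safe)
    fix x assume "x \<le> N" "x \<noteq> j" "x \<notin> (\<lambda>i. j+1+i) ` {..<N-j}"
    moreover have "x > j \<Longrightarrow> x \<in> (\<lambda>i. j+1+i) ` {..<N-j}"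
      using \<open>x \<le> N\<close> by (intro image_eqI[of _ _ "x - j - 1"]) auto
    ultimately show "x < j" by linarith
  qed (use jN in auto)
  have "(\<Prod>k\<in>{..N}-{j}. 1 - q^(2*k)/q^(2*j)) = (\<Prod>k<j. 1 - q^(2*k)/q^(2*j)) * (\<Prod>k\<in>(\<lambda>i. j+1+i) ` {..<N-j}. 1 - q^(2*k)/q^(2*j))"
    unfolding S by (rule prod.union_disjoint) auto
  also have "(\<Prod>k\<in>(\<lambda>i. j+1+i) ` {..<N-j}. 1 - q^(2*k)/q^(2*j)) = (\<Prod>i<N-j. 1 - q^(2*(j+1+i))/q^(2*j))"
    by (subst prod.reindex) (auto simp: inj_on_def)
  also have "\<dots> = P2 q (N-j)"
    unfolding P2_def
  proof (rule prod.cong[OF refl])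
    fix i
    have "q^(2*(j+1+i)) = q^(2*j) * q^(2*i+2)" by (simp add: power_add[symmetric] algebra_simps)
    thus "1 - q^(2*(j+1+i))/q^(2*j) = 1 - q^(2*i+2)" using q0 by simp
  qed
  finally show ?thesis by (simp add: N2)
qed

lemma N6: "j \<le> N \<Longrightarrow> (\<Prod>k\<in>{..N}-{j}. 1 - q^(2*k+2*j+2)) = P2 q (N+j+1) / (P2 q j * (1 - q^(4*j+2)))"
proof -
  assume jN: "j \<le> N"
  have ne: "1 - q^(4*j+2) \<noteq> 0" using pow_lt1[of "4*j+2"] by simp
  have "(\<Prod>k\<le>N. 1 - q^(2*k+2*j+2)) = (1 - q^(2*j+2*j+2)) * (\<Prod>k\<in>{..N}-{j}. 1 - q^(2*k+2*j+2))"
    using jN by (subst prod.remove[of _ j]) auto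
  moreover have "(\<Prod>k\<le>N. 1 - q^(2*k+2*j+2)) = P2 q (N+j+1) / P2 q j"
  proof -
    have "P2 q (j+(N+1)) = P2 q j * (\<Prod>i<N+1. 1 - q^(2*(j+i)+2))"
      unfolding P2_def by (rule prod_split_add)
    also have "(\<Prod>i<N+1. 1 - q^(2*(j+i)+2)) = (\<Prod>k\<le>N. 1 - q^(2*k+2*j+2))"
    proof (rule prod.cong)
      fix i have "2*(j+i)+2 = 2*i+2*j+2" by simp
      thus "1 - q^(2*(j+i)+2) = 1 - q^(2*i+2*j+2)" by (simp only:)
    qed auto
    finally show ?thesis using P2_pos[of j] by (simp add: field_simps add_ac)
  qed
  moreover have "2*j+2*j+2 = 4*j+2" by simp
  ultimately have "(1 - q^(4*j+2)) * (\<Prod>k\<in>{..N}-{j}. 1 - q^(2*k+2*j+2)) = P2 q (N+j+1) / P2 q j"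
    by simp
  from aux_div[OF ne this] show ?thesis by simp
qed

lemma node:
  assumes "j \<le> N"
  shows "(\<Prod>k<N. (1 - q^(2*k+1)/q^(2*j)) * (1 - q^(2*k+2*j+3))) /
         (\<Prod>k\<in>{..N}-{j}. (1 - q^(2*k)/q^(2*j)) * (1 - q^(2*k+2*j+2)))
       = q^j * (1 + q^(2*j+1)) * (P1 q (N-j) / P2 q (N-j)) * (P1 q (N+j+1) / P2 q (N+j+1))"
proof -
  have a: "P1 q (j+1) = P1 q j * (1 - q^(2*j+1))" by (simp add: P1_def)
  have b: "1 - q^(4*j+2) = (1 - q^(2*j+1)) * (1 + q^(2*j+1))"
    by (simp add: algebra_simps power_add[symmetric] mult_2_right[symmetric])
  have c: "q^(j*(j+1)) = q^(j*j) * q^j" by (simp add: power_add[symmetric] algebra_simps)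
  have ne: "1 - q^(2*j+1) \<noteq> 0" using pow_lt1[of "2*j+1"] by simp
  have ne2: "1 + q^(2*j+1) \<noteq> 0" using q0 by (smt (verit) zero_less_power)
  show ?thesis
    unfolding prod.distrib N3[OF assms] N4 N5[OF assms] N6[OF assms] a b c
    using q0 ne ne2 P1_pos[of j] P2_pos[of j] P1_pos[of "N-j"] P2_pos[of "N-j"] P1_pos[of "N+j+1"] P2_pos[of "N+j+1"]
    by (simp add: field_simps)
qed

lemma finite_id:
  "(P2 q N / P1 q (N+1))^2 = (\<Sum>j\<le>N. q^j*(1+q^(2*j+1)) * (P1 q (N-j)/P2 q (N-j)) * (P1 q (N+j+1)/P2 q (N+j+1)) / (1 - q^(2*j+1))^2)"
proof -
  define P where "P = (\<Prod>k<N. [:1 + q^(4*k+4), -(q^(2*k+1)):])"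
  define a where "a k = -(q^(2*k))" for k :: nat
  define b where "b k = 1 + q^(4*k+2)" for k :: nat
  define x where "x j = 1/q^(2*j) + q^(2*j+2)" for j :: nat
  have degP: "degree P \<le> N"
  proof -
    have "degree P \<le> (\<Sum>k<N. degree [:1 + q^(4*k+4), -(q^(2*k+1)):])"
      unfolding P_def using degree_prod_sum_le[of "{..<N}" "\<lambda>k. [:1 + q^(4*k+4), -(q^(2*k+1)):]"] by (simp add: o_def)
    also have "\<dots> \<le> (\<Sum>k<N. 1)" by (intro sum_mono) auto
    finally show ?thesis by simp
  qed
  have fac: "a k * x j + b k = (1 - q^(2*k)/q^(2*j)) * (1 - q^(2*k+2*j+2))" for k j
  proof -
    have e1: "q^(2*k+2*j+2) = q^(2*k) * q^(2*j+2)" by (simp add: power_add[symmetric])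
    have e2: "q^(4*k+2) = q^(2*k) * q^(2*k+2*j+2) / q^(2*j)"
    proof -
      have "q^(2*k) * q^(2*k+2*j+2) = q^(4*k+2) * q^(2*j)" by (simp add: power_add[symmetric] algebra_simps)
      thus ?thesis using q0 by (simp add: field_simps)
    qed
    show ?thesis unfolding a_def b_def x_def e2 using q0 by (simp add: field_simps e1 power_add)
  qed
  have root: "a j * x j + b j = 0" for j unfolding fac using q0 by simp
  have nz: "a k * x j + b k \<noteq> 0" if "j \<le> N" "k \<le> N" "k \<noteq> j" for j k
  proof -
    have "q^(2*k) \<noteq> q^(2*j)" using that q0 q1 by (simp add: Groups_Big.power_inject_exp')
    hence "1 - q^(2*k)/q^(2*j) \<noteq> 0" using q0 by simp
    moreover have "1 - q^(2*k+2*j+2) \<noteq> 0" using pow_lt1[of "2*k+2*j+2"] by simp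
    ultimately show ?thesis unfolding fac by simp
  qed
  have polyP: "poly P z = (\<Prod>k<N. (1 + q^(4*k+4)) - q^(2*k+1) * z)" for z
    unfolding P_def by (simp add: poly_prod algebra_simps)
  have Px: "poly P (x j) = (\<Prod>k<N. (1 - q^(2*k+1)/q^(2*j)) * (1 - q^(2*k+2*j+3)))" for j
    unfolding polyP
  proof (rule prod.cong[OF refl])
    fix k
    have ee: "2*k+2*j+3 = (2*k+1)+(2*j+2)" by simp
    have e1: "q^(2*k+1) * q^(2*j+2) = q^(2*k+2*j+3)" by (simp only: ee power_add)
    have e2: "q^(4*k+4) = q^(2*k+1) * q^(2*k+2*j+3) / q^(2*j)"
    proof -
      have "q^(2*k+1) * q^(2*k+2*j+3) = q^(4*k+4) * q^(2*j)" unfolding power_add[symmetric] by (rule arg_cong[where f="(^) q"]) simp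
      thus ?thesis using q0 by (simp add: field_simps)
    qed
    show "1 + q^(4*k+4) - q^(2*k+1) * x j = (1 - q^(2*k+1)/q^(2*j)) * (1 - q^(2*k+2*j+3))"
      unfolding x_def e2 using q0 by (simp add: field_simps e1[symmetric] power_add power3_eq_cube)
  qed
  have Py: "poly P (2*q) = P2 q N ^ 2"
    unfolding polyP P2_def power2_eq_square prod.distrib[symmetric]
  proof (rule prod.cong[OF refl])
    fix k
    have "q^(2*k+1) * (2*q) = 2 * q^(2*k+2)" by (simp add: algebra_simps)
    moreover have "q^(4*k+4) = q^(2*k+2) * q^(2*k+2)"
      unfolding power_add[symmetric] by (rule arg_cong[where f="(^) q"]) simp
    ultimately show "1 + q^(4*k+4) - q^(2*k+1) * (2*q) = (1 - q^(2*k+2)) * (1 - q^(2*k+2))"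
      by (simp add: algebra_simps)
  qed
  have Dy: "a k * (2*q) + b k = (1 - q^(2*k+1))^2" for k
  proof -
    have "q^(2*k) * (2*q) = 2 * q^(2*k+1)" by (simp add: algebra_simps)
    moreover have "q^(4*k+2) = q^(2*k+1) * q^(2*k+1)"
      unfolding power_add[symmetric] by (rule arg_cong[where f="(^) q"]) simp
    ultimately show ?thesis unfolding a_def b_def by (simp add: algebra_simps power2_eq_square)
  qed
  have L: "poly P (2*q) = (\<Sum>j\<le>N. poly P (x j) / (\<Prod>k\<in>{..N}-{j}. a k * x j + b k) * (\<Prod>k\<in>{..N}-{j}. a k * (2*q) + b k))"
    by (rule lagrange_interp[OF degP root nz])
  have PN: "P1 q (N+1) ^ 2 = (\<Prod>k\<le>N. (1 - q^(2*k+1))^2)"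
    by (simp add: P1_def lessThan_Suc_atMost power2_eq_square prod.distrib)
  have rem: "(\<Prod>k\<in>{..N}-{j}. (1 - q^(2*k+1))^2) = P1 q (N+1) ^ 2 / (1 - q^(2*j+1))^2" if "j \<le> N" for j
  proof -
    have ne: "(1 - q^(2*j+1))^2 \<noteq> 0" using pow_lt1[of "2*j+1"] by simp
    have "(\<Prod>k\<le>N. (1 - q^(2*k+1))^2) = (1 - q^(2*j+1))^2 * (\<Prod>k\<in>{..N}-{j}. (1 - q^(2*k+1))^2)"
      using that by (subst prod.remove[of _ j]) auto
    with PN aux_div[OF ne] show ?thesis by simp
  qed
  have "P2 q N ^ 2 = (\<Sum>j\<le>N. q^j*(1+q^(2*j+1)) * (P1 q (N-j)/P2 q (N-j)) * (P1 q (N+j+1)/P2 q (N+j+1)) * (P1 q (N+1) ^ 2 / (1 - q^(2*j+1))^2))"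
    unfolding Py[symmetric] L
  proof (rule sum.cong[OF refl])
    fix j assume j: "j \<in> {..N}"
    show "poly P (x j) / (\<Prod>k\<in>{..N}-{j}. a k * x j + b k) * (\<Prod>k\<in>{..N}-{j}. a k * (2*q) + b k) =
      q^j*(1+q^(2*j+1)) * (P1 q (N-j)/P2 q (N-j)) * (P1 q (N+j+1)/P2 q (N+j+1)) * (P1 q (N+1) ^ 2 / (1 - q^(2*j+1))^2)"
      unfolding Px fac Dy rem[OF j[simplified]] node[OF j[simplified], symmetric] prod.distrib by simp
  qed
  also have "\<dots> = (\<Sum>j\<le>N. q^j*(1+q^(2*j+1)) * (P1 q (N-j)/P2 q (N-j)) * (P1 q (N+j+1)/P2 q (N+j+1)) / (1 - q^(2*j+1))^2) * P1 q (N+1) ^ 2"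
    by (simp add: sum_distrib_right)
  finally show ?thesis using P1_pos[of "N+1"] by (simp add: field_simps)
qed

end


lemma qpoch_lim:
  fixes x z :: real
  assumes x0: "0 < x" and x1: "x < 1" and z0: "0 < z" and z1: "z < 1"
  shows "(\<lambda>n. \<Prod>k<n. 1 - z * x^k) \<longlonglongrightarrow> qpoch_inf z x" and "qpoch_inf z x > 0"
proof -
  define f where "f k = 1 - z * x^k" for k
  have sm: "summable (\<lambda>i. norm (f i - 1))"
  proof -
    have "summable (\<lambda>i. z * x^i)" using x0 x1 by (intro summable_mult summable_geometric) simp
    moreover have "norm (f i - 1) = z * x^i" for i using z0 x0 by (simp add: f_def)
    ultimately show ?thesis by simp
  qed
  have cp: "convergent_prod f"
    by (rule abs_convergent_prod_imp_convergent_prod[OF summable_imp_abs_convergent_prod[OF sm]])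
  have fpos: "f k > 0" for k
  proof -
    have "x^k \<le> 1" using x0 x1 by (simp add: power_le_one)
    hence "z * x^k < 1" using z0 z1 x0 by (smt (verit) mult_left_le zero_less_power)
    thus ?thesis by (simp add: f_def)
  qed
  have L: "(\<lambda>n. \<Prod>i\<le>n. f i) \<longlonglongrightarrow> qpoch_inf z x"
    using convergent_prod_LIMSEQ[OF cp] by (simp add: qpoch_inf_def f_def[abs_def])
  show L2: "(\<lambda>n. \<Prod>k<n. 1 - z * x^k) \<longlonglongrightarrow> qpoch_inf z x"
    by (rule LIMSEQ_imp_Suc) (use L in \<open>simp add: lessThan_Suc_atMost f_def\<close>)
  have "qpoch_inf z x \<noteq> 0"
    using prodinf_nonzero[OF cp] fpos by (simp add: qpoch_inf_def f_def[abs_def]) (metis less_irrefl)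
  moreover have "qpoch_inf z x \<ge> 0"
  proof (rule LIMSEQ_le_const[OF L2], intro exI allI impI prod_nonneg ballI)
    fix n k show "0 \<le> 1 - z * x^k" using fpos[of k] by (simp add: f_def)
  qed
  ultimately show "qpoch_inf z x > 0" by simp
qed

lemma aux_summ: "(c::real) \<noteq> 0 \<Longrightarrow> summable (\<lambda>n. f n * c * c) \<Longrightarrow> summable f"
proof -
  assume c: "c \<noteq> 0" and s: "summable (\<lambda>n. f n * c * c)"
  have "summable (\<lambda>n. (f n * c * c) * (1/(c*c)))" by (rule summable_mult2[OF s])
  moreover have "(\<lambda>n. (f n * c * c) * (1/(c*c))) = f" using c by (auto simp: fun_eq_iff)
  ultimately show ?thesis by simp
qed

lemma aux_reorder: "(A::real) / B * x * y = A * x * y / B"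
  by simp

lemma aux_suminf: "summable f \<Longrightarrow> (\<Sum>j. f j * c * c) = (\<Sum>j. f j) * (c::real) * c"
proof -
  assume s: "summable f"
  have "(\<Sum>j. f j) * c * c = (\<Sum>j. f j * c) * c" by (simp add: suminf_mult2[OF s])
  also have "\<dots> = (\<Sum>j. f j * c * c)" by (rule suminf_mult2[OF summable_mult2[OF s]])
  finally show ?thesis by simp
qed

lemma aux_alg: "(a::real) > 0 \<Longrightarrow> b > 0 \<Longrightarrow> (b/a)^2 = S * (a/b) * (a/b) \<Longrightarrow> S = (b/a)^4"
  by (simp add: power2_eq_square power4_eq_xxxx)

context
  fixes q :: real
  assumes q0: "0 < q" and q1: "q < 1"
begin

definition "Q1 = qpoch_inf q (q^2)"
definition "Q2 = qpoch_inf (q^2) (q^2)"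

lemma q2: "0 < q^2" "q^2 < 1" using q0 q1 by (auto simp: power_less_one_iff)

lemma P1_lim: "P1 q \<longlonglongrightarrow> Q1" and Q1_pos: "Q1 > 0"
proof -
  have "P1 q = (\<lambda>n. \<Prod>k<n. 1 - q * (q^2)^k)"
    by (auto simp: P1_def power_mult[symmetric] intro!: prod.cong)
  thus "P1 q \<longlonglongrightarrow> Q1" using qpoch_lim(1)[OF q2 q0 q1] by (simp add: Q1_def)
  show "Q1 > 0" using qpoch_lim(2)[OF q2 q0 q1] by (simp add: Q1_def)
qed

lemma P2_lim: "P2 q \<longlonglongrightarrow> Q2" and Q2_pos: "Q2 > 0"
proof -
  have "P2 q = (\<lambda>n. \<Prod>k<n. 1 - q^2 * (q^2)^k)"
    by (auto simp: P2_def power_mult[symmetric] power_add[symmetric] intro!: prod.cong)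
  thus "P2 q \<longlonglongrightarrow> Q2" using qpoch_lim(1)[OF q2 q2] by (simp add: Q2_def)
  show "Q2 > 0" using qpoch_lim(2)[OF q2 q2] by (simp add: Q2_def)
qed

lemma P2_mono: "n \<le> m \<Longrightarrow> P2 q m \<le> P2 q n"
proof -
  assume "n \<le> m"
  then obtain d where m: "m = n + d" using le_Suc_ex by blast
  have "P2 q m = P2 q n * (\<Prod>i<d. 1 - q^(2*(n+i)+2))" unfolding m P2_def by (rule prod_split_add)
  moreover have "(\<Prod>i<d. 1 - q^(2*(n+i)+2)) \<le> 1"
  proof (intro prod_le_1 conjI)
    fix i show "0 \<le> 1 - q^(2*(n+i)+2)" using pow_lt1[OF q0 q1, of "2*(n+i)+2"] by linarith
    show "1 - q^(2*(n+i)+2) \<le> 1" using q0 by simp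
  qed
  ultimately show ?thesis using P2_pos[OF q0 q1, of n] by (simp add: mult_left_le)
qed

lemma Q2_le: "Q2 \<le> P2 q n"
  by (rule LIMSEQ_le_const2[OF P2_lim]) (auto intro: P2_mono)

definition "T j = q^j * (1 + q^(2*j+1)) / (1 - q^(2*j+1))^2"

lemma T_sums: "T sums ((Q2/Q1)^4)"
proof -
  define r where "r n = P1 q n / P2 q n" for n
  define a where "a j N = (if j \<le> N then T j * r (N-j) * r (N+j+1) else 0)" for j N
  have r_lim: "r \<longlonglongrightarrow> Q1/Q2"
    unfolding r_def[abs_def] using Q2_pos by (intro tendsto_divide P1_lim P2_lim) auto
  have r_bd: "0 \<le> r n \<and> r n \<le> 1/Q2" for n
  proof -
    have "P1 q n / P2 q n \<le> 1 / P2 q n" using P1_le1[OF q0 q1, of n] P2_pos[OF q0 q1, of n] by (intro divide_right_mono) auto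
    also have "\<dots> \<le> 1/Q2" using Q2_le Q2_pos by (simp add: frac_le)
    finally show ?thesis using P1_pos[OF q0 q1, of n] P2_pos[OF q0 q1, of n] by (simp add: r_def)
  qed
  have T_bd: "0 \<le> T j \<and> T j \<le> 2 * q^j / (1-q)^2" for j
  proof -
    have a1: "q^(2*j+1) \<le> q" using q0 q1 by (simp add: power_le_one)
    have a2: "q^(2*j+1) > 0" using q0 by simp
    have "(1-q)^2 \<le> (1 - q^(2*j+1))^2" using a1 q1 by (intro power_mono) auto
    moreover have "1 + q^(2*j+1) \<le> 2" using a1 q1 by simp
    moreover have "(1-q)^2 > 0" using q1 by simp
    ultimately have "(1 + q^(2*j+1)) / (1 - q^(2*j+1))^2 \<le> 2 / (1-q)^2"
      using a2 by (intro frac_le) auto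
    hence "q^j * ((1 + q^(2*j+1)) / (1 - q^(2*j+1))^2) \<le> q^j * (2 / (1-q)^2)"
      using q0 by (intro mult_left_mono) auto
    moreover have "0 \<le> T j" using a2 q0 by (simp add: T_def)
    ultimately show ?thesis by (simp add: T_def mult.commute)
  qed
  define M where "M j = 2 * q^j / (1-q)^2 * (1/Q2) * (1/Q2)" for j
  have bound: "norm (a j N) \<le> M j" for j N
  proof (cases "j \<le> N")
    case True
    have "norm (a j N) = T j * r (N-j) * r (N+j+1)" using True T_bd r_bd by (simp add: a_def)
    also have "\<dots> \<le> M j"
    proof -
      have c1: "0 \<le> 2*q^j/(1-q)^2" using q0 by simp
      have c2: "0 \<le> 1/Q2" using Q2_pos by simp
      have "T j * r (N-j) \<le> 2*q^j/(1-q)^2 * (1/Q2)"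
        using T_bd[of j] r_bd[of "N-j"] c1 by (intro mult_mono) auto
      moreover have "0 \<le> 2*q^j/(1-q)^2 * (1/Q2)" using c1 c2 by (rule mult_nonneg_nonneg)
      ultimately show ?thesis unfolding M_def using T_bd[of j] r_bd[of "N-j"] r_bd[of "N+j+1"]
        by (intro mult_mono) auto
    qed
    finally show ?thesis .
  next
    case False
    thus ?thesis using Q2_pos q0 by (simp add: a_def M_def)
  qed
  have sumM: "summable M"
    unfolding M_def using q0 q1 by (intro summable_mult2 summable_divide summable_mult summable_geometric) auto
  have lim_a: "(\<lambda>N. a j N) \<longlonglongrightarrow> T j * (Q1/Q2) * (Q1/Q2)" for j
  proof -
    have "(\<lambda>N. T j * r (N-j) * r (N+j+1)) \<longlonglongrightarrow> T j * (Q1/Q2) * (Q1/Q2)"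
    proof (intro tendsto_mult tendsto_const)
      show "(\<lambda>N. r (N-j)) \<longlonglongrightarrow> Q1/Q2"
        by (rule filterlim_compose[OF r_lim filterlim_minus_const_nat_at_top])
      have "(\<lambda>N. r (N + (j+1))) \<longlonglongrightarrow> Q1/Q2" by (rule LIMSEQ_ignore_initial_segment[OF r_lim])
      thus "(\<lambda>N. r (N+j+1)) \<longlonglongrightarrow> Q1/Q2" by (simp add: add.assoc)
    qed
    moreover have "eventually (\<lambda>N. T j * r (N-j) * r (N+j+1) = a j N) sequentially"
      using eventually_ge_at_top[of j] by eventually_elim (simp add: a_def)
    ultimately show ?thesis by (rule Lim_transform_eventually)
  qed
  note tan = tannerys_theorem[of a "\<lambda>j. T j * (Q1/Q2) * (Q1/Q2)" sequentially M, OF lim_a _ sumM]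
  have tan2: "summable (\<lambda>n. norm (T n * (Q1/Q2) * (Q1/Q2))) \<and>
           ((\<lambda>N. suminf (\<lambda>j. a j N)) \<longlonglongrightarrow> (\<Sum>j. T j * (Q1/Q2) * (Q1/Q2)))"
    using tan bound by (auto intro: always_eventually)
  have eqN: "suminf (\<lambda>j. a j N) = (P2 q N / P1 q (N+1))^2" for N
  proof -
    have "suminf (\<lambda>j. a j N) = (\<Sum>j\<le>N. a j N)" by (rule suminf_finite) (auto simp: a_def)
    also have "\<dots> = (\<Sum>j\<le>N. q^j*(1+q^(2*j+1)) * (P1 q (N-j)/P2 q (N-j)) * (P1 q (N+j+1)/P2 q (N+j+1)) / (1 - q^(2*j+1))^2)"
    proof (rule sum.cong[OF refl])
      fix j assume "j \<in> {..N}"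
      hence "a j N = T j * r (N-j) * r (N+j+1)" by (simp add: a_def)
      thus "a j N = q^j*(1+q^(2*j+1)) * (P1 q (N-j)/P2 q (N-j)) * (P1 q (N+j+1)/P2 q (N+j+1)) / (1 - q^(2*j+1))^2"
        unfolding T_def r_def by (simp only: aux_reorder)
    qed
    finally show ?thesis using finite_id[OF q0 q1, of N] by linarith
  qed
  have limL: "(\<lambda>N. (P2 q N / P1 q (N+1))^2) \<longlonglongrightarrow> (Q2/Q1)^2"
    using Q1_pos by (intro tendsto_power tendsto_divide P2_lim LIMSEQ_Suc[OF P1_lim, simplified Suc_eq_plus1]) auto
  have "(Q2/Q1)^2 = (\<Sum>j. T j * (Q1/Q2) * (Q1/Q2))"
  proof -
    have lim2: "(\<lambda>N. (P2 q N / P1 q (N+1))^2) \<longlonglongrightarrow> (\<Sum>j. T j * (Q1/Q2) * (Q1/Q2))"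
      using conjunct2[OF tan2] by (simp only: eqN)
    show ?thesis by (rule tendsto_unique[OF trivial_limit_sequentially limL lim2])
  qed
  moreover have sT: "summable T"
  proof -
    have "summable (\<lambda>n. T n * (Q1/Q2) * (Q1/Q2))" by (rule summable_norm_cancel[OF conjunct1[OF tan2]])
    moreover have "Q1/Q2 \<noteq> 0" using Q1_pos Q2_pos by simp
    ultimately show ?thesis using aux_summ[of "Q1/Q2" T] by blast
  qed
  moreover have "(\<Sum>j. T j * (Q1/Q2) * (Q1/Q2)) = (\<Sum>j. T j) * (Q1/Q2) * (Q1/Q2)"
    by (rule aux_suminf[OF sT])
  ultimately have "(\<Sum>j. T j) = (Q2/Q1)^4" using aux_alg[OF Q1_pos Q2_pos] by simp
  with sT show ?thesis by (simp add: sums_iff)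
qed

end


lemma int_has_sum_split:
  fixes f :: "int \<Rightarrow> real"
  assumes s1: "summable (\<lambda>n. norm (f (int n)))" and s2: "summable (\<lambda>n. norm (f (-int n - 1)))"
  shows "(f has_sum ((\<Sum>n. f (int n)) + (\<Sum>n. f (-int n - 1)))) UNIV"
proof -
  define g where "g n = -int n - 1" for n :: nat
  have h1: "((\<lambda>n. f (int n)) has_sum (\<Sum>n. f (int n))) UNIV"
    by (rule norm_summable_imp_has_sum[OF s1]) (rule summable_sums[OF summable_norm_cancel[OF s1]])
  have h2: "((\<lambda>n. f (g n)) has_sum (\<Sum>n. f (g n))) UNIV"
  proof -
    have s2': "summable (\<lambda>n. norm (f (g n)))" using s2 by (simp add: g_def)
    show ?thesis
      by (rule norm_summable_imp_has_sum[OF s2']) (rule summable_sums[OF summable_norm_cancel[OF s2']])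
  qed
  have A: "(f has_sum (\<Sum>n. f (int n))) (range int)"
    using has_sum_reindex[of int UNIV f] h1 by (simp add: o_def inj_on_def)
  have B: "(f has_sum (\<Sum>n. f (g n))) (range g)"
    using has_sum_reindex[of g UNIV f] h2 by (simp add: o_def inj_on_def g_def)
  have D: "range int \<inter> range g = {}" by (auto simp: g_def)
  have U: "range int \<union> range g = UNIV"
  proof (safe)
    fix k :: int assume "k \<notin> range g"
    show "k \<in> range int"
    proof (cases "k \<ge> 0")
      case True thus ?thesis by (intro range_eqI[of _ _ "nat k"]) simp
    next
      case False
      hence "k = g (nat (-k-1))" by (simp add: g_def)
      with \<open>k \<notin> range g\<close> show ?thesis by auto
    qed
  qed auto
  from has_sum_Un_disjoint[OF A B D] show ?thesis unfolding U g_def .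
qed

lemma pf_poly:
  fixes q u :: real
  shows "q^2 * (u^2*(1+q*u)) * ((1-q^2)^5*(1+q^2)) =
      (q^2*(1-q^2)) * q^2 * (1-q*u)^2 * (1-q^3*u)^2
    + (-(q^2*(2+q^2))) * q * (q-u) * (1-q*u)^2 * (1-q^3*u)^2
    + (2*q^2*(1-q^2)*(1+q^2)) * (q-u)^2 * (1-q^3*u)^2
    + (-(q^2*(1-q^2)*(1+q^2))) * (q-u)^2 * (1-q*u) * (1-q^3*u)^2
    + (q^4*(1-q^2)) * (q-u)^2 * (1-q*u)^2
    + (q^4*(1+2*q^2)) * (q-u)^2 * (1-q*u)^2 * (1-q^3*u)"
  by algebra

lemma pf_gen:
  fixes q E K D1 D2 D3 n1 n2 n3 n4 n5 n6 :: real
  assumes "q \<noteq> 0" "K \<noteq> 0" "D1 \<noteq> 0" "D2 \<noteq> 0" "D3 \<noteq> 0"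
    and H: "q^2 * E * K = n1 * q^2 * D2^2 * D3^2 + n2 * q * D1 * D2^2 * D3^2 + n3 * D1^2 * D3^2
      + n4 * D1^2 * D2 * D3^2 + n5 * D1^2 * D2^2 + n6 * D1^2 * D2^2 * D3"
  shows "E / ((D1/q)^2 * D2^2 * D3^2) = (n1/K)/(D1/q)^2 + (n2/K)/(D1/q) + (n3/K)/D2^2 + (n4/K)/D2 + (n5/K)/D3^2 + (n6/K)/D3"
proof -
  have "E = (q^2 * E * K) / (q^2 * K)" using assms(1,2) by simp
  also have "\<dots> = (n1 * q^2 * D2^2 * D3^2 + n2 * q * D1 * D2^2 * D3^2 + n3 * D1^2 * D3^2
      + n4 * D1^2 * D2 * D3^2 + n5 * D1^2 * D2^2 + n6 * D1^2 * D2^2 * D3) / (q^2 * K)" unfolding H ..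
  finally have E: "E = \<dots>" .
  show ?thesis unfolding E using assms(1-5) by (simp add: field_simps power2_eq_square)
qed

lemma pf:
  fixes q u :: real
  assumes q0: "0 < q" and q1: "q < 1" and d1: "1 - u/q \<noteq> 0" and d2: "1 - q*u \<noteq> 0" and d3: "1 - q^3*u \<noteq> 0"
  shows "u^2 * (1 + q*u) / ((1 - u/q)^2 * (1 - q*u)^2 * (1 - q^3*u)^2) =
     (q^2*(1-q^2))/((1-q^2)^5*(1+q^2)) / (1 - u/q)^2
   + (-(q^2*(2+q^2)))/((1-q^2)^5*(1+q^2)) / (1 - u/q)
   + (2*q^2*(1-q^2)*(1+q^2))/((1-q^2)^5*(1+q^2)) / (1 - q*u)^2
   + (-(q^2*(1-q^2)*(1+q^2)))/((1-q^2)^5*(1+q^2)) / (1 - q*u)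
   + (q^4*(1-q^2))/((1-q^2)^5*(1+q^2)) / (1 - q^3*u)^2
   + (q^4*(1+2*q^2))/((1-q^2)^5*(1+q^2)) / (1 - q^3*u)"
proof -
  have qn: "q \<noteq> 0" using q0 by simp
  have e: "1 - u/q = (q-u)/q" using qn by (simp add: field_simps)
  have D1: "q - u \<noteq> 0" using d1 unfolding e by simp
  have K: "(1-q^2)^5*(1+q^2) \<noteq> 0"
  proof -
    have "1 - q^2 \<noteq> 0" using pow_lt1[OF q0 q1, of 2] by simp
    moreover have "1 + q^2 \<noteq> 0" by (smt (verit) zero_le_power2)
    ultimately show ?thesis by simp
  qed
  show ?thesis unfolding e by (rule pf_gen[OF qn K D1 d2 d3 pf_poly])
qed

lemma gen_sym:
  fixes q y P N1 N2 N3 :: real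
  assumes "q \<noteq> 0" "y \<noteq> 0" "N1 \<noteq> 0" "N2 \<noteq> 0" "N3 \<noteq> 0"
  shows "inverse (y*q) * ((1/(q^2*y^2))^2*(P/(q*y^2))/(((-N3)/(q^3*y^2))^2*((-N2)/(q*y^2))^2*((-N1)*q/y^2)^2))
     = y*((y^2)^2*P/(N1^2*N2^2*N3^2))"
  using assms by (simp add: field_simps power2_eq_square power3_eq_cube)

lemma sym_alg:
  fixes q y :: real
  assumes "q \<noteq> 0" "y \<noteq> 0" "1 - y^2/q \<noteq> 0" "1 - q*y^2 \<noteq> 0" "1 - q^3*y^2 \<noteq> 0"
  shows "inverse (y*q) * (((inverse (y*q))^2)^2*(1+q*(inverse (y*q))^2)/((1-(inverse (y*q))^2/q)^2*(1-q*(inverse (y*q))^2)^2*(1-q^3*(inverse (y*q))^2)^2))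
       = y * ((y^2)^2*(1+q*y^2)/((1-y^2/q)^2*(1-q*y^2)^2*(1-q^3*y^2)^2))"
proof -
  have u0: "y^2 \<noteq> 0" using assms by simp
  have iy: "(inverse (y*q))^2 = 1/(q^2*y^2)" by (simp add: power_mult_distrib field_simps)
  have f1: "1 - (1/(q^2*y^2))/q = -(1 - q^3*y^2)/(q^3*y^2)" using assms u0 by (simp add: field_simps power3_eq_cube power2_eq_square)
  have f2: "1 - q*(1/(q^2*y^2)) = -(1 - q*y^2)/(q*y^2)" using assms u0 by (simp add: field_simps power2_eq_square)
  have f3: "1 - q^3*(1/(q^2*y^2)) = -(1 - y^2/q)*q/y^2" using assms u0 by (simp add: field_simps power3_eq_cube power2_eq_square)
  have f4: "1 + q*(1/(q^2*y^2)) = (1 + q*y^2)/(q*y^2)" using assms u0 by (simp add: field_simps power2_eq_square)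
  show ?thesis unfolding iy f1 f2 f3 f4
    by (rule gen_sym[OF assms(1,2,3,4,5)])
qed
lemma combine:
  fixes q y R D1 D2 D3 b1 b2 b3 a1 a2 a3 :: real
  assumes "q \<noteq> 0" "D1 \<noteq> 0" "D2 \<noteq> 0" "D3 \<noteq> 0"
    and R: "R = b1/D1^2 + a1/D1 + b2/D2^2 + a2/D2 + b3/D3^2 + a3/D3"
  shows "y*R = (b1*q)*((y/q)/D1^2) + (a1*q)*((y/q)/D1) + b2*(y/D2^2) + a2*(y/D2) + (b3/q)*((y*q)/D3^2) + (a3/q)*((y*q)/D3)"
  unfolding R using assms(1-4) by (simp add: field_simps)
lemma csum_gen:
  fixes q A B :: real
  assumes "A \<noteq> 0" "B \<noteq> 0" "q \<noteq> 0" "B = 1 + q^2"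
  shows "(q^2*A)/(A^5*B) * q + (2*q^2*A*B)/(A^5*B) + (q^4*A)/(A^5*B) / q = 2*q^2*(1+q+q^2)/(A^4*B)"
proof -
  have "(q^2*A)/(A^5*B) * q + (2*q^2*A*B)/(A^5*B) + (q^4*A)/(A^5*B) / q = 2*q^2*(q+B)/(A^4*B)"
    using assms(1-3) by (simp add: field_simps power2_eq_square power3_eq_cube power4_eq_xxxx) algebra
  thus ?thesis using assms(4) by (simp add: algebra_simps)
qed

context
  fixes q :: real
  assumes q0: "0 < q" and q1: "q < 1"
begin

lemma qnz: "q \<noteq> 0" using q0 by simp

lemma powi_2m: "q powi (2*m + c) = (q powi m)^2 * q powi c"
proof -
  have "q powi (2*m + c) = q powi (m*2) * q powi c" using qnz by (simp add: power_int_add mult.commute)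
  also have "q powi (m*2) = (q powi m)^2" by (simp add: power_int_mult)
  finally show ?thesis .
qed

lemma powi_ne1: "k \<noteq> 0 \<Longrightarrow> q powi k \<noteq> 1"
proof -
  assume k: "k \<noteq> 0"
  obtain n :: nat where n: "k = int n \<or> k = - int n" by (metis int_cases2)
  with k have n0: "n > 0" by auto
  have "q^n < 1" using pow_lt1[OF q0 q1 n0] .
  hence ne: "q^n \<noteq> 1" by simp
  from n show ?thesis
  proof
    assume "k = int n" thus ?thesis using ne by simp
  next
    assume "k = - int n"
    hence "q powi k = inverse (q^n)" by (simp add: power_int_minus)
    thus ?thesis using ne by (metis inverse_1 inverse_inverse_eq)
  qed
qed

definition "hz m = q powi m / (1 - q powi (2*m+1))^2"
definition "gz m = q powi m / (1 - q powi (2*m+1))"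
definition "Bz m = (1 + q powi (2*m+1)) * q powi (5*m) /
   ((1 - q powi (2*m-1))^2 * (1 - q powi (2*m+1))^2 * (1 - q powi (2*m+3))^2)"

lemma neg_powi: "q powi (-int n - 1) = 1 / (q * q^n)"
proof -
  have e: "-int n - 1 = - int (Suc n)" by simp
  show ?thesis by (simp only: e power_int_minus power_int_of_nat power_Suc inverse_eq_divide)
qed

lemma alg1: "(q::real) \<noteq> 0 \<Longrightarrow> a \<noteq> 0 \<Longrightarrow> 1 - a^2*q \<noteq> 0 \<Longrightarrow>
   (1/(q*a)) / (1 - (1/(q*a))^2*q)^2 = q*a^3/(1 - a^2*q)^2"
  by (simp add: field_simps power2_eq_square power3_eq_cube)
lemma alg2: "(q::real) \<noteq> 0 \<Longrightarrow> a \<noteq> 0 \<Longrightarrow> 1 - a^2*q \<noteq> 0 \<Longrightarrow>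
   (1/(q*a)) / (1 - (1/(q*a))^2*q) = - (a/(1 - a^2*q))"
  by (simp add: field_simps power2_eq_square)
lemma alg3: "(a::real) * (1 + a^2*q) / (1 - a^2*q)^2 = a/(1 - a^2*q)^2 + q*a^3/(1 - a^2*q)^2"
  by (simp only: add_divide_distrib[symmetric]) (simp add: algebra_simps power2_eq_square power3_eq_cube)

lemma qn_facts: "0 < q^n" "(q^n)^2*q < 1" "1 - (q^n)^2*q \<noteq> 0" "q^(2*n+1) = (q^n)^2*q"
proof -
  show "0 < q^n" using q0 by simp
  have "q^n \<le> 1" using q0 q1 by (simp add: power_le_one)
  hence "(q^n)^2 \<le> 1" using q0 by (simp add: power_le_one)
  hence "(q^n)^2*q \<le> 1*q" using q0 by (intro mult_right_mono) auto
  thus "(q^n)^2*q < 1" using q1 by simp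
  thus "1 - (q^n)^2*q \<noteq> 0" by simp
  show "q^(2*n+1) = (q^n)^2*q" by (simp add: power_mult[symmetric] mult.commute)
qed

lemma hz_pos: "hz (int n) = q^n / (1 - (q^n)^2*q)^2"
  unfolding hz_def powi_2m by simp
lemma hz_neg: "hz (-int n - 1) = q*(q^n)^3/(1 - (q^n)^2*q)^2"
proof -
  have nz: "q^n \<noteq> 0" using q0 by simp
  show ?thesis unfolding hz_def powi_2m neg_powi power_int_1_right
    by (rule alg1[OF qnz nz qn_facts(3)])
qed
lemma gz_pos: "gz (int n) = q^n / (1 - (q^n)^2*q)"
  unfolding gz_def powi_2m by simp
lemma gz_neg: "gz (-int n - 1) = - (q^n / (1 - (q^n)^2*q))"
proof -
  have nz: "q^n \<noteq> 0" using q0 by simp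
  show ?thesis unfolding gz_def powi_2m neg_powi power_int_1_right
    by (rule alg2[OF qnz nz qn_facts(3)])
qed

lemma T_eq: "T q n = hz (int n) + hz (-int n - 1)"
  unfolding T_def[OF q0 q1] hz_pos hz_neg qn_facts(4) by (rule alg3)

lemma hz_has_sum: "(hz has_sum ((Q2 q/Q1 q)^4)) UNIV"
proof -
  have nn1: "0 \<le> hz (int n)" for n using qn_facts(1)[of n] by (simp add: hz_pos)
  have nn2: "0 \<le> hz (-int n - 1)" for n using qn_facts(1)[of n] q0
    unfolding hz_neg by (intro divide_nonneg_nonneg mult_nonneg_nonneg) auto
  have sT: "summable (T q)" using T_sums[OF q0 q1] by (simp add: sums_iff)
  have s1: "summable (\<lambda>n. norm (hz (int n)))"
    by (rule summable_comparison_test[OF _ sT]) (use nn1 nn2 T_eq in auto)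
  have s2: "summable (\<lambda>n. norm (hz (-int n - 1)))"
    by (rule summable_comparison_test[OF _ sT]) (use nn1 nn2 T_eq in auto)
  have "(\<Sum>n. hz (int n)) + (\<Sum>n. hz (-int n - 1)) = (\<Sum>n. T q n)"
    unfolding T_eq using summable_norm_cancel[OF s1] summable_norm_cancel[OF s2] by (simp add: suminf_add)
  also have "\<dots> = (Q2 q/Q1 q)^4" using T_sums[OF q0 q1] by (simp add: sums_iff)
  finally show ?thesis using int_has_sum_split[OF s1 s2] by simp
qed

lemma gz_has_sum: "(gz has_sum 0) UNIV"
proof -
  define c where "c n = q^n / (1 - (q^n)^2*q)" for n :: nat
  have bd: "norm (c n) \<le> q^n / (1 - q)" for n
  proof -
    have "0 < 1 - q" using q1 by simp
    moreover have "1 - q \<le> 1 - (q^n)^2*q"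
    proof -
      have "q^n \<le> 1" using q0 q1 by (simp add: power_le_one)
      hence "(q^n)^2 \<le> 1" using q0 by (simp add: power_le_one)
      hence "(q^n)^2*q \<le> 1*q" using q0 by (intro mult_right_mono) auto
      thus ?thesis by simp
    qed
    ultimately show ?thesis using qn_facts(1,2)[of n] unfolding c_def
      by (auto intro!: divide_left_mono mult_pos_pos)
  qed
  have sg: "summable (\<lambda>n. q^n / (1 - q))" using q0 q1 by (intro summable_divide summable_geometric) auto
  have s1: "summable (\<lambda>n. norm (gz (int n)))"
    by (rule summable_comparison_test[OF _ sg]) (use bd in \<open>auto simp: gz_pos c_def\<close>)
  have s2: "summable (\<lambda>n. norm (gz (-int n - 1)))"
    by (rule summable_comparison_test[OF _ sg]) (use bd in \<open>auto simp: gz_neg c_def\<close>)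
  have "(\<Sum>n. gz (-int n - 1)) = - (\<Sum>n. gz (int n))"
    unfolding gz_neg gz_pos using summable_norm_cancel[OF s1] by (simp add: gz_pos suminf_minus)
  thus ?thesis using int_has_sum_split[OF s1 s2] by simp
qed

lemma shift_has_sum: "(f has_sum S) UNIV \<Longrightarrow> ((\<lambda>m. f (m + k)) has_sum S) (UNIV :: int set)"
proof -
  assume h: "(f has_sum S) UNIV"
  have "range (\<lambda>m::int. m + k) = UNIV" by (auto intro: range_eqI[of _ _ "x - k" for x])
  thus ?thesis using has_sum_reindex[of "\<lambda>m::int. m + k" UNIV f S] h by (simp add: o_def inj_on_def)
qed


definition "Rf u = u^2*(1+q*u)/((1-u/q)^2*(1-q*u)^2*(1-q^3*u)^2)"

lemma p1: "q powi (2*m+1) = q * (q powi m)^2"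
  using powi_2m[of m 1] by simp
lemma p2: "q powi (2*m-1) = (q powi m)^2 / q"
proof -
  have "2*m-1 = 2*m + (-1)" by simp
  thus ?thesis using powi_2m[of m "-1"] by (simp add: power_int_minus divide_inverse)
qed
lemma p3: "q powi (2*m+3) = q^3 * (q powi m)^2"
  using powi_2m[of m 3] by simp
lemma p5: "q powi (5*m) = (q powi m)^5"
proof -
  have "q powi (5*m) = q powi (m*5)" by (simp add: mult.commute)
  also have "\<dots> = (q powi m)^5" by (simp add: power_int_mult)
  finally show ?thesis .
qed
lemma pm1: "q powi (m-1) = q powi m / q"
proof -
  have "q powi (m + (-1)) = q powi m * q powi (-1)" using qnz by (rule power_int_add[OF disjI1])
  thus ?thesis by (simp add: power_int_minus divide_inverse)
qed
lemma pp1: "q powi (m+1) = q powi m * q"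
  using power_int_add[OF disjI1[OF qnz], of m 1] by simp
lemma pneg: "q powi (-m-1) = inverse (q powi m * q)"
proof -
  have e: "-m-1 = -(m+1)" by simp
  have "q powi (-m-1) = inverse (q powi (m+1))" unfolding e by (rule power_int_minus)
  thus ?thesis unfolding pp1 .
qed

lemma dnz: "q powi m \<noteq> 0" "1 - (q powi m)^2/q \<noteq> 0" "1 - q*(q powi m)^2 \<noteq> 0" "1 - q^3*(q powi m)^2 \<noteq> 0"
proof -
  show "q powi m \<noteq> 0" using qnz by (simp add: power_int_not_zero)
  have "2*m-1 \<noteq> 0" "2*m+1 \<noteq> 0" "2*m+3 \<noteq> 0" by presburger+
  thus "1 - (q powi m)^2/q \<noteq> 0" "1 - q*(q powi m)^2 \<noteq> 0" "1 - q^3*(q powi m)^2 \<noteq> 0"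
    using powi_ne1 p1[of m] p2[of m] p3[of m] by (metis eq_iff_diff_eq_0)+
qed

lemma Bz_y: "Bz m = q powi m * Rf ((q powi m)^2)"
proof -
  define y where "y = q powi m"
  have "Bz m = (1 + q*y^2) * y^5 / ((1 - y^2/q)^2 * (1 - q*y^2)^2 * (1 - q^3*y^2)^2)"
    unfolding Bz_def p1 p2 p3 p5 y_def ..
  also have "\<dots> = y * ((y^2)^2*(1+q*y^2)/((1-y^2/q)^2*(1-q*y^2)^2*(1-q^3*y^2)^2))"
  proof -
    have y5: "y^5 = y * (y^2)^2" by algebra
    show ?thesis unfolding y5 by (simp add: ac_simps)
  qed
  finally show ?thesis by (simp add: Rf_def y_def)
qed

lemma Bz_sym: "Bz (-m-1) = Bz m"
proof -
  have "Bz (-m-1) = inverse (q powi m * q) * Rf ((inverse (q powi m * q))^2)"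
    by (simp only: Bz_y pneg)
  also have "\<dots> = q powi m * Rf ((q powi m)^2)"
    unfolding Rf_def by (rule sym_alg[OF qnz dnz])
  finally show ?thesis by (simp add: Bz_y)
qed

definition "b1 = (q^2*(1-q^2))/((1-q^2)^5*(1+q^2))"
definition "a1 = (-(q^2*(2+q^2)))/((1-q^2)^5*(1+q^2))"
definition "b2 = (2*q^2*(1-q^2)*(1+q^2))/((1-q^2)^5*(1+q^2))"
definition "a2 = (-(q^2*(1-q^2)*(1+q^2)))/((1-q^2)^5*(1+q^2))"
definition "b3 = (q^4*(1-q^2))/((1-q^2)^5*(1+q^2))"
definition "a3 = (q^4*(1+2*q^2))/((1-q^2)^5*(1+q^2))"

lemma Bz_decomp: "Bz m = (b1*q)*hz(m + -1) + (a1*q)*gz(m + -1) + b2*hz m + a2*gz m + (b3/q)*hz(m+1) + (a3/q)*gz(m+1)"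
proof -
  define y where "y = q powi m"
  have e1: "2*(m + -1)+1 = 2*m-1" "2*(m+1)+1 = 2*m+3" by simp_all
  have h1: "hz (m + -1) = (y/q)/(1 - y^2/q)^2" "gz (m + -1) = (y/q)/(1 - y^2/q)"
    unfolding hz_def gz_def e1 p2 using pm1[of m] by (simp_all add: y_def)
  have h2: "hz m = y/(1 - q*y^2)^2" "gz m = y/(1 - q*y^2)"
    unfolding hz_def gz_def p1 y_def by simp_all
  have h3: "hz (m+1) = (y*q)/(1 - q^3*y^2)^2" "gz (m+1) = (y*q)/(1 - q^3*y^2)"
    unfolding hz_def gz_def e1 p3 pp1 y_def by simp_all
  have R: "Rf (y^2) = b1/(1 - y^2/q)^2 + a1/(1 - y^2/q) + b2/(1 - q*y^2)^2 + a2/(1 - q*y^2) + b3/(1 - q^3*y^2)^2 + a3/(1 - q^3*y^2)"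
    unfolding Rf_def b1_def a1_def b2_def a2_def b3_def a3_def
    by (rule pf[OF q0 q1]) (use dnz[of m] in \<open>simp_all add: y_def\<close>)
  have "Bz m = y * Rf (y^2)" by (simp add: Bz_y y_def)
  also have "\<dots> = (b1*q)*((y/q)/(1 - y^2/q)^2) + (a1*q)*((y/q)/(1 - y^2/q)) + b2*(y/(1 - q*y^2)^2) + a2*(y/(1 - q*y^2)) + (b3/q)*((y*q)/(1 - q^3*y^2)^2) + (a3/q)*((y*q)/(1 - q^3*y^2))"
    by (rule combine[OF qnz _ _ _ R]) (use dnz[of m] in \<open>simp_all add: y_def\<close>)
  finally show ?thesis unfolding h1 h2 h3 .
qed

lemma Bz_has_sum: "(Bz has_sum ((b1*q + b2 + b3/q) * (Q2 q/Q1 q)^4)) UNIV"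
proof -
  define S where "S = (Q2 q/Q1 q)^4"
  have H: "((\<lambda>m. hz (m + k)) has_sum S) UNIV" for k
    unfolding S_def by (rule shift_has_sum[OF hz_has_sum])
  have G: "((\<lambda>m. gz (m + k)) has_sum 0) UNIV" for k
    by (rule shift_has_sum[OF gz_has_sum])
  have H0: "(hz has_sum S) UNIV" unfolding S_def by (rule hz_has_sum)
  have "((\<lambda>m. (b1*q)*hz(m + -1) + (a1*q)*gz(m + -1) + b2*hz m + a2*gz m + (b3/q)*hz(m+1) + (a3/q)*gz(m+1))
     has_sum ((b1*q)*S + (a1*q)*0 + b2*S + a2*0 + (b3/q)*S + (a3/q)*0)) UNIV"
    by (intro has_sum_add has_sum_cmult_right H G H0 gz_has_sum)
  moreover have "(\<lambda>m. (b1*q)*hz(m + -1) + (a1*q)*gz(m + -1) + b2*hz m + a2*gz m + (b3/q)*hz(m+1) + (a3/q)*gz(m+1)) = Bz"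
    by (rule ext) (simp only: Bz_decomp)
  ultimately show ?thesis by (simp add: S_def algebra_simps)
qed

lemma Bz_nonneg: "0 \<le> Bz m"
  unfolding Bz_def using q0 by (intro divide_nonneg_nonneg mult_nonneg_nonneg) (auto intro: add_nonneg_nonneg less_imp_le)

lemma main_sums: "(\<lambda>n. Bz (int n)) sums ((b1*q + b2 + b3/q) * (Q2 q/Q1 q)^4 / 2)"
proof -
  define TOT where "TOT = (b1*q + b2 + b3/q) * (Q2 q/Q1 q)^4"
  have hs: "(Bz has_sum TOT) UNIV" unfolding TOT_def by (rule Bz_has_sum)
  have "Bz summable_on range int"
    by (rule summable_on_subset_banach[of _ UNIV]) (use hs in \<open>auto simp: summable_on_def\<close>)
  hence "(Bz \<circ> int) summable_on UNIV" using summable_on_reindex[of int UNIV Bz] by (simp add: inj_on_def)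
  hence sB: "summable (\<lambda>n. Bz (int n))" by (simp add: o_def summable_on_imp_summable)
  have s1: "summable (\<lambda>n. norm (Bz (int n)))" using sB Bz_nonneg by simp
  have s2: "summable (\<lambda>n. norm (Bz (-int n - 1)))" using s1 by (simp add: Bz_sym)
  have "(Bz has_sum ((\<Sum>n. Bz (int n)) + (\<Sum>n. Bz (-int n - 1)))) UNIV"
    by (rule int_has_sum_split[OF s1 s2])
  hence "(\<Sum>n. Bz (int n)) + (\<Sum>n. Bz (-int n - 1)) = TOT" using hs has_sum_unique by blast
  hence "2 * (\<Sum>n. Bz (int n)) = TOT" by (simp add: Bz_sym)
  hence "(\<Sum>n. Bz (int n)) = TOT / 2" by simp
  with sB show ?thesis unfolding TOT_def by (simp add: sums_iff)
qed

lemma coef: "b1*q + b2 + b3/q = 2*q^2*(1+q+q^2)/((1-q^2)^4*(1+q^2))"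
proof -
  have A: "1 - q^2 \<noteq> 0" using pow_lt1[OF q0 q1, of 2] by simp
  have B: "1 + q^2 \<noteq> 0" by (smt (verit) zero_le_power2)
  have "(q^2*(1-q^2))/((1-q^2)^5*(1+q^2)) * q + (2*q^2*(1-q^2)*(1+q^2))/((1-q^2)^5*(1+q^2)) + (q^4*(1-q^2))/((1-q^2)^5*(1+q^2)) / q
     = 2*q^2*(1+q+q^2)/((1-q^2)^4*(1+q^2))"
    by (rule csum_gen[OF A B qnz refl])
  thus ?thesis unfolding b1_def b2_def b3_def .
qed

end

lemma fin_alg: "(A::real) \<noteq> 0 \<Longrightarrow> B \<noteq> 0 \<Longrightarrow>
   2*q^2*c/(A^4*B) * X / 2 = A^2 * q^2 * X * c / (B * A^6)"
  by (simp add: field_simps power2_eq_square power4_eq_xxxx) algebra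

theorem mainTheorem16:
  fixes q :: real
  assumes "0 < q" and "q < 1"
  shows "(\<lambda>n::nat. (1 + q ^ (2*n+1)) * q ^ (5*n) /
            ((1 - q powi (2 * int n - 1))^2 * (1 - q ^ (2*n+1))^2 * (1 - q ^ (2*n+3))^2))
         sums (gosper_pi_q q ^ 2 * (1 + q + q^2) * q powr (3/2) / ((1 + q^2) * (1 - q^2)^6))"
proof -
  note q0 = assms(1) and q1 = assms(2)
  have f: "(\<lambda>n::nat. (1 + q ^ (2*n+1)) * q ^ (5*n) /
            ((1 - q powi (2 * int n - 1))^2 * (1 - q ^ (2*n+1))^2 * (1 - q ^ (2*n+3))^2)) = (\<lambda>n. Bz q (int n))"
  proof (rule ext)
    fix n :: nat
    have e1: "2 * int n + 1 = int (2*n+1)" "5 * int n = int (5*n)" "2 * int n + 3 = int (2*n+3)" by simp_all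
    show "(1 + q ^ (2*n+1)) * q ^ (5*n) /
            ((1 - q powi (2 * int n - 1))^2 * (1 - q ^ (2*n+1))^2 * (1 - q ^ (2*n+3))^2) = Bz q (int n)"
      by (simp only: Bz_def[OF q0 q1] e1 power_int_of_nat)
  qed
  have S: "(\<lambda>n. Bz q (int n)) sums ((b1 q*q + b2 q + b3 q/q) * (Q2 q/Q1 q)^4 / 2)"
    by (rule main_sums[OF q0 q1])
  have pw: "(q powr (1/4))^2 * q powr (3/2) = q^2"
  proof -
    have "(q powr (1/4))^2 * q powr (3/2) = q powr (1/4 + 1/4 + 3/2)" by (simp only: power2_eq_square powr_add)
    also have "(1/4 + 1/4 + 3/2 :: real) = 2" by simp
    finally show ?thesis using q0 by simp
  qed
  have A: "1 - q^2 \<noteq> 0" using pow_lt1[OF q0 q1, of 2] by simp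
  have B: "1 + q^2 \<noteq> 0" by (smt (verit) zero_le_power2)
  have Q1: "Q1 q \<noteq> 0" using Q1_pos[OF q0 q1] by simp
  have g: "gosper_pi_q q ^ 2 = (1-q^2)^2 * (q powr (1/4))^2 * (Q2 q/Q1 q)^4"
    unfolding gosper_pi_q_def Q1_def[OF q0 q1] Q2_def[OF q0 q1] by (simp add: power_mult_distrib power_divide field_simps power2_eq_square power4_eq_xxxx)
  have "(b1 q*q + b2 q + b3 q/q) * (Q2 q/Q1 q)^4 / 2 = gosper_pi_q q ^ 2 * (1 + q + q^2) * q powr (3/2) / ((1 + q^2) * (1 - q^2)^6)"
  proof -
    have "gosper_pi_q q ^ 2 * (1 + q + q^2) * q powr (3/2) = (1-q^2)^2 * ((q powr (1/4))^2 * q powr (3/2)) * (Q2 q/Q1 q)^4 * (1 + q + q^2)"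
      unfolding g by (simp add: ac_simps)
    also have "\<dots> = (1-q^2)^2 * q^2 * (Q2 q/Q1 q)^4 * (1 + q + q^2)" unfolding pw ..
    finally have gf: "gosper_pi_q q ^ 2 * (1 + q + q^2) * q powr (3/2) = (1-q^2)^2 * q^2 * (Q2 q/Q1 q)^4 * (1 + q + q^2)" .
    have "(b1 q*q + b2 q + b3 q/q) * (Q2 q/Q1 q)^4 / 2 = 2*q^2*(1+q+q^2)/((1-q^2)^4*(1+q^2)) * (Q2 q/Q1 q)^4 / 2"
      by (simp only: coef[OF q0 q1])
    also have "\<dots> = (1-q^2)^2 * q^2 * (Q2 q/Q1 q)^4 * (1+q+q^2) / ((1+q^2)*(1-q^2)^6)"
      by (rule fin_alg[OF A B])
    also have "\<dots> = gosper_pi_q q ^ 2 * (1 + q + q^2) * q powr (3/2) / ((1 + q^2) * (1 - q^2)^6)"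
      by (simp only: gf)
    finally show ?thesis .
  qed
  with S f show ?thesis by simp
qed

end
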